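(* For any distribution of $H$ on $(0,1)$, let $Q_\bullet=(Q_k)_{k\ge0}$ be a Markov chain on $\{1,2,\dots\}$ with transition probabilities $p_{m,n}=\binom{n-1}{m-1}\mu_{n-m,m}$ for $1\le m\le n$ (and $0$ for $n<m$). Then $Q_\bullet$ has the transition mechanism of a Galton–Watson branching process in a random environment in which, at each generation $k$, every individual present independently has a number of offspring with the geometric$(1-H_k)$ distribution on $\{1,2,\dots\}$ (i.e. $P(\text{offspring}=r\mid H_k)=H_k^{r-1}(1-H_k)$), with $H_0,H_1,\dots$ i.i.d. copies of $H$. Equivalently, for every $k\ge0$, $m\ge1$ and $|z|\le1$, $$E\big(z^{Q_{k+1}-Q_k}\,\big|\,Q_k=m\big)=E\Big(\frac{1-H}{1-Hz}\Big)^m .$$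
   Context: $H$ is a random variable with values in $(0,1)$ and $\mu_{i,j}:=E[H^i(1-H)^j]$. *)

theory Defs
  imports "HOL-Probability.Probability"
begin

definition mu :: "'a measure \<Rightarrow> ('a \<Rightarrow> real) \<Rightarrow> nat \<Rightarrow> nat \<Rightarrow> real" where
  "mu M H i j = (\<integral>\<omega>. H \<omega> ^ i * (1 - H \<omega>) ^ j \<partial>M)"

definition trans_p :: "'a measure \<Rightarrow> ('a \<Rightarrow> real) \<Rightarrow> nat \<Rightarrow> nat \<Rightarrow> real" where
  "trans_p M H m n = (if m \<le> n then real ((n - 1) choose (m - 1)) * mu M H (n - m) m else 0)"

definition geom1_pmf :: "real \<Rightarrow> nat pmf" where
  "geom1_pmf h = map_pmf Suc (geometric_pmf (1 - h))"

fun offspring_sum :: "real \<Rightarrow> nat \<Rightarrow> nat pmf" where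
  "offspring_sum h 0 = return_pmf 0"
| "offspring_sum h (Suc m) =
     bind_pmf (offspring_sum h m) (\<lambda>x. map_pmf (\<lambda>y. x + y) (geom1_pmf h))"

end

theory Submission imports Defs "HOL-Analysis.Analysis" begin
lemma off_eq: "offspring_sum h m = map_pmf (\<lambda>k. k + m) (neg_binomial_pmf m (1-h))"
proof (induction m)
  case 0 then show ?case by simp
next
  case (Suc m)
  show ?case
    unfolding offspring_sum.simps Suc neg_binomial_pmf_Suc geom1_pmf_def
    apply (simp add: pair_pmf_def map_pmf_def bind_assoc_pmf bind_return_pmf bind_return_pmf')
    apply (subst bind_commute_pmf)
    apply (simp add: algebra_simps)
    done
qed

lemma pmf_off:
  assumes "0 < h" "h < 1" "1 \<le> m"
  shows "pmf (offspring_sum h m) n = (if m \<le> n then real ((n - 1) choose (m - 1)) * (h ^ (n - m) * (1 - h) ^ m) else 0)"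
proof (cases "m \<le> n")
  case True
  have "pmf (offspring_sum h m) n = pmf (map_pmf (\<lambda>k. k + m) (neg_binomial_pmf m (1-h))) ((n-m) + m)"
    using True by (simp add: off_eq)
  also have "\<dots> = pmf (neg_binomial_pmf m (1-h)) (n-m)"
    by (rule pmf_map_inj') (auto simp: inj_def)
  also have "\<dots> = real ((n - m + m - 1) choose (n-m)) * (1-h) ^ m * h ^ (n-m)"
    using assms by (subst pmf_neg_binomial) auto
  also have "(n - m + m - 1) choose (n-m) = (n - 1) choose (m - 1)"
  proof -
    have e: "n - m + m - 1 = n - 1" "n - m = (n-1) - (m-1)" using True assms by auto
    have "m - 1 \<le> n - 1" using True by simp
    then show ?thesis unfolding e(1) unfolding e(2) by (rule binomial_symmetric[symmetric])
  qed
  finally show ?thesis using True by simp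
next
  case False
  then have "n \<notin> set_pmf (offspring_sum h m)" by (auto simp: off_eq)
  then show ?thesis using False by (simp add: set_pmf_iff)
qed

lemma negbin_complex:
  fixes w :: complex
  assumes "norm w < 1" "1 \<le> m"
  shows "(\<lambda>j. of_nat ((m + j - 1) choose j) * w ^ j) sums inverse ((1 - w) ^ m)"
proof -
  have "(\<lambda>n. (-1)^n * ((of_nat m + of_nat n - 1) gchoose n) * (-w)^n) sums (1 + (-w)) powr (- of_nat m)"
    by (rule one_plus_neg_powr_powser) (use assms in simp)
  moreover have "(1 + (-w)) powr (- of_nat m) = inverse ((1 - w) ^ m)"
    using assms by (simp add: powr_minus powr_nat')
  moreover have "(-1)^n * ((of_nat m + of_nat n - 1) gchoose n) * (-w)^n = of_nat ((m + n - 1) choose n) * w ^ n" for n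
  proof -
    have "(of_nat m + of_nat n - 1 :: complex) = of_nat (m + n - 1)" using assms by (simp add: of_nat_diff)
    then have "((of_nat m + of_nat n - 1 :: complex) gchoose n) = of_nat ((m + n - 1) choose n)"
      by (simp add: binomial_gbinomial)
    moreover have "(-1::complex)^n * (-w)^n = w^n" by (simp add: power_minus_mult[symmetric] power_mult_distrib[symmetric])
    ultimately show ?thesis by (metis mult.commute mult.left_commute)
  qed
  ultimately show ?thesis by (simp only:)
qed

lemma negbin_real:
  fixes w :: real
  assumes "0 \<le> w" "w < 1" "1 \<le> m"
  shows "(\<lambda>j. real ((m + j - 1) choose j) * w ^ j) sums inverse ((1 - w) ^ m)"
proof -
  have "(\<lambda>j. complex_of_real (real ((m + j - 1) choose j) * w ^ j)) sums complex_of_real (inverse ((1 - w) ^ m))"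
    using negbin_complex[of "complex_of_real w" m] assms by simp
  then show ?thesis by (simp only: sums_of_real_iff)
qed
theorem mainTheorem4:
  fixes M :: "'a measure" and H :: "'a \<Rightarrow> real"
  assumes "prob_space M"
    and "H \<in> borel_measurable M"
    and "\<forall>\<omega>\<in>space M. 0 < H \<omega> \<and> H \<omega> < 1"
  shows "(\<forall>m n. 1 \<le> m \<longrightarrow>
            trans_p M H m n = (\<integral>\<omega>. pmf (offspring_sum (H \<omega>) m) n \<partial>M))
       \<and> (\<forall>m (z::complex). 1 \<le> m \<longrightarrow> norm z \<le> 1 \<longrightarrow>
            (\<lambda>j. complex_of_real (trans_p M H m (m + j)) * z ^ j) sums
              (\<integral>\<omega>. ((1 - complex_of_real (H \<omega>)) / (1 - complex_of_real (H \<omega>) * z)) ^ m \<partial>M))"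
proof (intro conjI allI impI)
  interpret P: prob_space M by fact
  have Hm[measurable]: "H \<in> borel_measurable M" by fact
  have H01: "\<And>\<omega>. \<omega> \<in> space M \<Longrightarrow> 0 < H \<omega> \<and> H \<omega> < 1" using assms(3) by blast
  fix m n :: nat assume m: "1 \<le> m"
  have "(\<integral>\<omega>. pmf (offspring_sum (H \<omega>) m) n \<partial>M) =
        (\<integral>\<omega>. (if m \<le> n then real ((n - 1) choose (m - 1)) * (H \<omega> ^ (n - m) * (1 - H \<omega>) ^ m) else 0) \<partial>M)"
    by (rule Bochner_Integration.integral_cong[OF refl]) (use H01 m in \<open>simp add: pmf_off\<close>)
  also have "\<dots> = trans_p M H m n"
    by (cases "m \<le> n") (simp_all add: trans_p_def mu_def)
  finally show "trans_p M H m n = (\<integral>\<omega>. pmf (offspring_sum (H \<omega>) m) n \<partial>M)" ..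
next
  interpret P: prob_space M by fact
  have Hm[measurable]: "H \<in> borel_measurable M" by fact
  have H01: "\<And>\<omega>. \<omega> \<in> space M \<Longrightarrow> 0 < H \<omega> \<and> H \<omega> < 1" using assms(3) by blast
  fix m :: nat and z :: complex assume m: "1 \<le> m" and z: "norm z \<le> 1"
  define C where "C j = real ((m + j - 1) choose j)" for j
  define g where "g j \<omega> = C j * (H \<omega> ^ j * (1 - H \<omega>) ^ m)" for j \<omega>
  define f where "f j \<omega> = complex_of_real (g j \<omega>) * z ^ j" for j \<omega>
  have C0: "0 \<le> C j" for j by (simp add: C_def)
  have g0: "0 \<le> g j \<omega>" if "\<omega> \<in> space M" for j \<omega>
    using H01[OF that] C0 by (simp add: g_def)
  have gm[measurable]: "g j \<in> borel_measurable M" for j unfolding g_def by measurable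
  have gint: "integrable M (g j)" for j
  proof (rule P.integrable_const_bound[where B = "C j"])
    show "AE x in M. norm (g j x) \<le> C j"
    proof (rule AE_I2)
      fix x assume x: "x \<in> space M"
      have "H x ^ j * (1 - H x) ^ m \<le> 1 * 1"
        using H01[OF x] by (intro mult_mono power_le_one) auto
      then show "norm (g j x) \<le> C j" using g0[OF x] C0[of j]
        by (simp add: g_def mult_left_le)
    qed
  qed simp
  have fint: "integrable M (f j)" for j
    unfolding f_def by (intro integrable_mult_left integrable_of_real gint)
  have intf: "integral\<^sup>L M (f j) = complex_of_real (trans_p M H m (m + j)) * z ^ j" for j
  proof -
    have "(m + j - 1) choose (m - 1) = (m + j - 1) choose j"
    proof -
      have e: "j = (m + j - 1) - (m - 1)" using m by simp
      show ?thesis by (subst e, rule binomial_symmetric) (use m in simp)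
    qed
    then have T: "trans_p M H m (m + j) = C j * mu M H j m" by (simp add: trans_p_def C_def)
    have "f j = (\<lambda>\<omega>. complex_of_real (g j \<omega>) * z ^ j)" by (simp add: fun_eq_iff f_def)
    then have "integral\<^sup>L M (f j) = (\<integral>\<omega>. complex_of_real (g j \<omega>) \<partial>M) * z ^ j"
      by (simp only: integral_mult_left_zero)
    also have "\<dots> = complex_of_real (integral\<^sup>L M (g j)) * z ^ j"
      by (simp only: integral_complex_of_real)
    also have "integral\<^sup>L M (g j) = C j * mu M H j m"
      unfolding g_def mu_def by (rule integral_mult_right_zero)
    finally show ?thesis using T by simp
  qed
  have gsum: "(\<lambda>j. g j \<omega>) sums 1" if "\<omega> \<in> space M" for \<omega>
  proof -
    have "(\<lambda>j. (1 - H \<omega>) ^ m * (C j * H \<omega> ^ j)) sums ((1 - H \<omega>) ^ m * inverse ((1 - H \<omega>) ^ m))"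
      unfolding C_def using H01[OF that] m by (intro sums_mult negbin_real) auto
    then show ?thesis using H01[OF that] by (simp add: g_def mult_ac)
  qed
  have summ_norm: "AE \<omega> in M. summable (\<lambda>j. norm (f j \<omega>))"
  proof (rule AE_I2)
    fix \<omega> assume w: "\<omega> \<in> space M"
    show "summable (\<lambda>j. norm (f j \<omega>))"
    proof (rule summable_comparison_test'[where N=0])
      show "summable (\<lambda>j. g j \<omega>)" using gsum[OF w] by (rule sums_summable)
      fix j
      have "norm (norm (f j \<omega>)) = g j \<omega> * norm z ^ j" using g0[OF w]
        by (simp add: f_def norm_mult norm_power)
      also have "\<dots> \<le> g j \<omega> * 1" using g0[OF w] z by (intro mult_left_mono power_le_one) auto
      finally show "norm (norm (f j \<omega>)) \<le> g j \<omega>" by simp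
    qed
  qed
  have summ_gint: "summable (\<lambda>j. integral\<^sup>L M (g j))"
  proof (rule summableI_nonneg_bounded[where x=1])
    fix j show "0 \<le> integral\<^sup>L M (g j)" by (intro integral_nonneg_AE AE_I2 g0)
  next
    fix n
    have "sum (\<lambda>j. integral\<^sup>L M (g j)) {..<n} = integral\<^sup>L M (\<lambda>\<omega>. \<Sum>j<n. g j \<omega>)"
      by (rule Bochner_Integration.integral_sum[symmetric]) (rule gint)
    also have "\<dots> \<le> integral\<^sup>L M (\<lambda>\<omega>. 1)"
    proof (rule Bochner_Integration.integral_mono)
      show "integrable M (\<lambda>\<omega>. \<Sum>j<n. g j \<omega>)" by (intro Bochner_Integration.integrable_sum gint)
      show "integrable M (\<lambda>\<omega>. 1::real)" by simp
      fix \<omega> assume w: "\<omega> \<in> space M"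
      have "(\<Sum>j<n. g j \<omega>) \<le> (\<Sum>j. g j \<omega>)"
        by (rule sum_le_suminf) (use gsum[OF w] g0[OF w] in \<open>auto intro: sums_summable\<close>)
      then show "(\<Sum>j<n. g j \<omega>) \<le> 1" using sums_unique[OF gsum[OF w]] by simp
    qed
    also have "\<dots> = 1" by (simp add: P.prob_space)
    finally show "sum (\<lambda>j. integral\<^sup>L M (g j)) {..<n} \<le> 1" .
  qed
  have summ_int: "summable (\<lambda>j. \<integral>\<omega>. norm (f j \<omega>) \<partial>M)"
  proof (rule summable_comparison_test'[where N=0, OF summ_gint])
    fix j
    have "(\<integral>\<omega>. norm (f j \<omega>) \<partial>M) = (\<integral>\<omega>. g j \<omega> * norm z ^ j \<partial>M)"
      by (rule Bochner_Integration.integral_cong[OF refl]) (use g0 in \<open>simp add: f_def norm_mult norm_power\<close>)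
    also have "\<dots> = integral\<^sup>L M (g j) * norm z ^ j" by simp
    finally have e: "(\<integral>\<omega>. norm (f j \<omega>) \<partial>M) = integral\<^sup>L M (g j) * norm z ^ j" .
    have i0: "0 \<le> integral\<^sup>L M (g j)" by (intro integral_nonneg_AE AE_I2 g0)
    have "integral\<^sup>L M (g j) * norm z ^ j \<le> integral\<^sup>L M (g j) * 1"
      using i0 z by (intro mult_left_mono power_le_one) auto
    then show "norm (\<integral>\<omega>. norm (f j \<omega>) \<partial>M) \<le> integral\<^sup>L M (g j)"
      using i0 e by simp
  qed
  have S: "(\<lambda>j. integral\<^sup>L M (f j)) sums (\<integral>\<omega>. (\<Sum>j. f j \<omega>) \<partial>M)"
    by (rule sums_integral[OF fint summ_norm summ_int])
  have pt: "(\<Sum>j. f j \<omega>) = ((1 - complex_of_real (H \<omega>)) / (1 - complex_of_real (H \<omega>) * z)) ^ m"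
    if w: "\<omega> \<in> space M" for \<omega>
  proof -
    have nw: "norm (complex_of_real (H \<omega>) * z) < 1"
    proof -
      have "norm (complex_of_real (H \<omega>) * z) = H \<omega> * norm z" using H01[OF w] by (simp add: norm_mult)
      also have "\<dots> \<le> H \<omega>" using H01[OF w] z by (simp add: mult_left_le)
      finally show ?thesis using H01[OF w] by simp
    qed
    have A: "(\<lambda>j. (1 - complex_of_real (H \<omega>)) ^ m * (of_nat ((m + j - 1) choose j) * (complex_of_real (H \<omega>) * z) ^ j))
           sums ((1 - complex_of_real (H \<omega>)) ^ m * inverse ((1 - complex_of_real (H \<omega>) * z) ^ m))"
      by (intro sums_mult negbin_complex nw m)
    have B: "(1 - complex_of_real (H \<omega>)) ^ m * (of_nat ((m + j - 1) choose j) * (complex_of_real (H \<omega>) * z) ^ j) = f j \<omega>" for j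
      by (simp add: f_def g_def C_def power_mult_distrib mult_ac)
    have R: "(1 - complex_of_real (H \<omega>)) ^ m * inverse ((1 - complex_of_real (H \<omega>) * z) ^ m)
        = ((1 - complex_of_real (H \<omega>)) / (1 - complex_of_real (H \<omega>) * z)) ^ m"
      unfolding power_divide by (simp only: divide_inverse)
    from A have "(\<lambda>j. f j \<omega>) sums (((1 - complex_of_real (H \<omega>)) / (1 - complex_of_real (H \<omega>) * z)) ^ m)"
      unfolding B R .
    then show ?thesis by (rule sums_unique[symmetric])
  qed
  have "(\<integral>\<omega>. (\<Sum>j. f j \<omega>) \<partial>M) = (\<integral>\<omega>. ((1 - complex_of_real (H \<omega>)) / (1 - complex_of_real (H \<omega>) * z)) ^ m \<partial>M)"
    by (rule Bochner_Integration.integral_cong[OF refl]) (rule pt)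
  with S show "(\<lambda>j. complex_of_real (trans_p M H m (m + j)) * z ^ j) sums
              (\<integral>\<omega>. ((1 - complex_of_real (H \<omega>)) / (1 - complex_of_real (H \<omega>) * z)) ^ m \<partial>M)"
    by (simp add: intf)
qed
end
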